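(* Let $X^{(n)}=\{X_1,\dots,X_n\}\subset\mathbb{R}^d$ and $u^{(n)}=\{u_1,\dots,u_n\}\subset\mathbb{R}^d$, and let $\hat T$ be a solution of the discrete optimal transport problem from $u^{(n)}$ to $X^{(n)}$. Then for every $i$, $$\mathrm{BP}(\hat T(u_i))\in[\mathrm{TD}^-(u_i;u^{(n)}),\ \mathrm{TD}(u_i;u^{(n)})].$$
   Context: An empirical optimal transport map $\hat T_{Z^{(n)}}$ from $u^{(n)}$ to a set $Z^{(n)}$ of $n$ points is any bijection $T:u^{(n)}\to Z^{(n)}$ minimizing $\frac1n\sum_{i=1}^n\|T(u_i)-u_i\|^2$; $\hat T=\hat T_{X^{(n)}}$. $\mathcal{Q}_{\ell,n}$ is the set of all sets $Z^{(n)}$ of $n$ points of $\mathbb{R}^d$ sharing exactly $n-\ell$ elements with $X^{(n)}$, and $\mathrm{BP}(\hat T(u_i))=\frac1n\min\{\ell\in\{1,\dots,n\}:\sup_{Z^{(n)}\in\mathcal{Q}_{\ell,n}}\|\hat T(u_i)-\hat T_{Z^{(n)}}(u_i)\|=\infty\}$. Tukey depth: $\mathrm{TD}(u;u^{(n)})=\min_{v\in\mathcal{S}^{d-1}}\frac1n\sum_{j}\mathbf{1}(\langle v,u_j-u\rangle\geq0)$. Lower Tukey depth: $\mathrm{TD}^-(u;u^{(n)})=\frac{n+1}{n}-\max_{v\in\mathcal{S}^{d-1}}\frac1n\sum_j\mathbf{1}(\langle v,u_j-u\rangle\geq0)$. *)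

theory Defs
  imports "HOL-Analysis.Analysis"
begin

definition ot_cost :: "'a::euclidean_space set \<Rightarrow> ('a \<Rightarrow> 'a) \<Rightarrow> real" where
  "ot_cost U T = (1 / real (card U)) * (\<Sum>u\<in>U. (norm (T u - u))\<^sup>2)"

definition is_ot_map :: "'a::euclidean_space set \<Rightarrow> 'a set \<Rightarrow> ('a \<Rightarrow> 'a) \<Rightarrow> bool" where
  "is_ot_map U Z T \<longleftrightarrow> bij_betw T U Z \<and>
     (\<forall>T'. bij_betw T' U Z \<longrightarrow> ot_cost U T \<le> ot_cost U T')"

definition Qset :: "nat \<Rightarrow> 'a set \<Rightarrow> 'a set set" where
  "Qset l X = {Z. finite Z \<and> card Z = card X \<and> card (Z \<inter> X) = card X - l}"

text \<open>The supremum is taken over all contaminated sets Z and all optimal maps for Z;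
  "sup = infinity" means the set of distances is unbounded.\<close>
definition BP :: "'a::euclidean_space set \<Rightarrow> 'a set \<Rightarrow> ('a \<Rightarrow> 'a) \<Rightarrow> 'a \<Rightarrow> real" where
  "BP U X That u = (1 / real (card U)) *
     real (LEAST l. 1 \<le> l \<and> l \<le> card U \<and>
        \<not> (\<exists>B. \<forall>Z T. Z \<in> Qset l X \<and> is_ot_map U Z T \<longrightarrow> norm (That u - T u) \<le> B))"

definition tukey_depth :: "'a::euclidean_space \<Rightarrow> 'a set \<Rightarrow> real" where
  "tukey_depth u U = Min ((\<lambda>v. (1 / real (card U)) * real (card {w\<in>U. inner v (w - u) \<ge> 0}))
                          ` {v. norm v = 1})"

definition lower_tukey_depth :: "'a::euclidean_space \<Rightarrow> 'a set \<Rightarrow> real" where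
  "lower_tukey_depth u U = (real (card U) + 1) / real (card U) -
     Max ((\<lambda>v. (1 / real (card U)) * real (card {w\<in>U. inner v (w - u) \<ge> 0})) ` {v. norm v = 1})"

end

theory Submission
  imports Defs
begin

lemma cont_Max_img:
  fixes g :: "'b \<Rightarrow> 'a::topological_space \<Rightarrow> real"
  assumes "finite K" "K \<noteq> {}" "\<And>w. w \<in> K \<Longrightarrow> continuous_on S (g w)"
  shows "continuous_on S (\<lambda>v. Max ((\<lambda>w. g w v) ` K))"
  using assms
proof (induction K rule: finite_ne_induct)
  case (singleton x) then show ?case by simp
next
  case (insert x F)
  have "continuous_on S (\<lambda>v. max (g x v) (Max ((\<lambda>w. g w v) ` F)))"
    using insert by (intro continuous_on_max) auto
  moreover have "\<And>v. Max ((\<lambda>w. g w v) ` insert x F) = max (g x v) (Max ((\<lambda>w. g w v) ` F))"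
    using insert by simp
  ultimately show ?case by simp
qed

lemma unif_eps:
  fixes u :: "'a::euclidean_space"
  assumes "finite K" "K \<noteq> {}" "\<And>v. norm v = 1 \<Longrightarrow> \<exists>w\<in>K. inner v (w - u) > 0"
  shows "\<exists>e>0. \<forall>v. norm v = 1 \<longrightarrow> (\<exists>w\<in>K. inner v (w - u) \<ge> e)"
proof -
  define f where "f = (\<lambda>v. Max ((\<lambda>w. inner v (w - u)) ` K))"
  have c: "continuous_on (sphere 0 1) f" unfolding f_def
    using assms by (intro cont_Max_img) (auto intro!: continuous_intros)
  obtain b :: 'a where "b \<in> Basis" using nonempty_Basis by blast
  then have "norm b = 1" by simp
  then have ne: "sphere (0::'a) 1 \<noteq> {}" by auto
  obtain x where x: "x \<in> sphere 0 1" "\<forall>y\<in>sphere 0 1. f x \<le> f y"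
    using continuous_attains_inf[OF compact_sphere ne c] by blast
  have att: "\<And>v. \<exists>w\<in>K. inner v (w - u) = f v"
  proof -
    fix v
    have "f v \<in> (\<lambda>w. inner v (w - u)) ` K" unfolding f_def using assms by (intro Max_in) auto
    then show "\<exists>w\<in>K. inner v (w - u) = f v" by auto
  qed
  have fge: "\<And>v w. w \<in> K \<Longrightarrow> inner v (w - u) \<le> f v" unfolding f_def using assms by auto
  have "norm x = 1" using x by simp
  then obtain w where "w \<in> K" "inner x (w - u) > 0" using assms(3) by blast
  then have pos: "f x > 0" using fge[of w x] by linarith
  show ?thesis
  proof (intro exI[of _ "f x"] conjI allI impI pos)
    fix v :: 'a assume "norm v = 1"
    then have "f x \<le> f v" using x by simp
    then show "\<exists>w\<in>K. f x \<le> inner v (w - u)" using att[of v] by force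
  qed
qed

lemma ot_mono:
  assumes "is_ot_map U Z T" "finite U" "a \<in> U" "b \<in> U" "a \<noteq> b"
  shows "inner (T a - T b) (a - b) \<ge> 0"
proof -
  define T' where "T' = T(a := T b, b := T a)"
  have bij: "bij_betw T U Z" using assms(1) unfolding is_ot_map_def by blast
  have "bij_betw T' U Z"
  proof -
    have "T' = T \<circ> Transposition.transpose a b"
      unfolding T'_def by (auto simp: Transposition.transpose_def fun_eq_iff)
    moreover have "bij_betw (Transposition.transpose a b) U U"
      using assms by (simp add: bij_betw_transpose_iff)
    ultimately show ?thesis using bij bij_betw_trans by metis
  qed
  then have le: "ot_cost U T \<le> ot_cost U T'" using assms(1) unfolding is_ot_map_def by blast
  have cpos: "card U > 0" using assms by (auto simp: card_gt_0_iff)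
  define R where "R = U - {a, b}"
  have U: "U = insert a (insert b R)" using assms unfolding R_def by auto
  have fR: "finite R" "a \<notin> R" "b \<notin> R" using assms unfolding R_def by auto
  have eqR: "(\<Sum>w\<in>R. (norm (T' w - w))\<^sup>2) = (\<Sum>w\<in>R. (norm (T w - w))\<^sup>2)"
    using fR by (intro sum.cong) (auto simp: T'_def)
  have "(\<Sum>w\<in>U. (norm (T w - w))\<^sup>2) \<le> (\<Sum>w\<in>U. (norm (T' w - w))\<^sup>2)"
    using le cpos unfolding ot_cost_def by (simp add: field_simps)
  then have "(norm (T a - a))\<^sup>2 + (norm (T b - b))\<^sup>2 \<le> (norm (T b - a))\<^sup>2 + (norm (T a - b))\<^sup>2"
    using fR assms(5) eqR unfolding U by (simp add: T'_def)
  then show ?thesis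
    by (simp add: power2_norm_eq_inner inner_diff_left inner_diff_right inner_commute algebra_simps)
qed

lemma ot_exists:
  fixes U Z :: "'a::euclidean_space set"
  assumes "finite U" "finite Z" "card U = card Z"
  shows "\<exists>T. is_ot_map U Z T"
proof -
  define B where "B = {T. T \<in> Pi\<^sub>E U (\<lambda>_. Z) \<and> bij_betw T U Z}"
  have fP: "finite (Pi\<^sub>E U (\<lambda>_. Z))" using assms by (intro finite_PiE) auto
  have fB: "finite B" unfolding B_def by (rule finite_subset[OF _ fP]) auto
  obtain h where h: "bij_betw h U Z" using finite_same_card_bij assms by blast
  have "restrict h U \<in> B" unfolding B_def using h
    by (auto simp: bij_betw_def inj_on_def image_def)
  then have neB: "B \<noteq> {}" by blast
  define m where "m = Min (ot_cost U ` B)"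
  have "m \<in> ot_cost U ` B" unfolding m_def using fB neB by (intro Min_in) auto
  then obtain T where T: "T \<in> B" "ot_cost U T = m" by auto
  show ?thesis
  proof (intro exI[of _ T])
    show "is_ot_map U Z T" unfolding is_ot_map_def
    proof (intro conjI allI impI)
      show "bij_betw T U Z" using T unfolding B_def by blast
      fix T' assume b': "bij_betw T' U Z"
      have r: "restrict T' U \<in> B" unfolding B_def using b'
        by (auto simp: bij_betw_def inj_on_def image_def)
      have "ot_cost U (restrict T' U) = ot_cost U T'" unfolding ot_cost_def
        by (intro arg_cong[where f="\<lambda>x. _ * x"] sum.cong) auto
      moreover have "m \<le> ot_cost U (restrict T' U)" unfolding m_def using fB r by simp
      ultimately show "ot_cost U T \<le> ot_cost U T'" using T by simp
    qed
  qed
qed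


lemma unbounded_k:
  fixes U X :: "'a::euclidean_space set" and That :: "'a \<Rightarrow> 'a" and u v0 :: 'a
  assumes fU: "finite U" and fX: "finite X" and cX: "card X = card U"
    and uU: "u \<in> U" and nv: "norm v0 = 1"
  shows "\<not> (\<exists>B. \<forall>Z T. Z \<in> Qset (card {w\<in>U. inner v0 (w - u) \<ge> 0}) X \<and> is_ot_map U Z T
            \<longrightarrow> norm (That u - T u) \<le> B)"
proof
  define S where "S = {w\<in>U. inner v0 (w - u) \<ge> 0}"
  define k where "k = card S"
  assume "\<exists>B. \<forall>Z T. Z \<in> Qset (card {w\<in>U. inner v0 (w - u) \<ge> 0}) X \<and> is_ot_map U Z T
            \<longrightarrow> norm (That u - T u) \<le> B"
  then obtain B where B: "\<And>Z T. Z \<in> Qset k X \<Longrightarrow> is_ot_map U Z T \<Longrightarrow> norm (That u - T u) \<le> B"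
    unfolding k_def S_def by blast
  have SU: "S \<subseteq> U" unfolding S_def by auto
  have fS: "finite S" using SU fU finite_subset by blast
  have kn: "k \<le> card U" unfolding k_def using SU fU card_mono by blast
  have uS: "u \<in> S" using uU unfolding S_def by simp
  define M where "M = (\<Sum>x\<in>X. norm x)"
  have Mx: "\<And>x. x \<in> X \<Longrightarrow> norm x \<le> M" unfolding M_def using fX
    by (intro member_le_sum) auto
  have M0: "M \<ge> 0" unfolding M_def by (intro sum_nonneg) auto
  define Q where "Q = (\<Sum>w\<in>U. \<bar>M * norm (w - u) / inner v0 (w - u)\<bar>)"
  have Qw: "\<And>w. w \<in> U \<Longrightarrow> \<bar>M * norm (w - u) / inner v0 (w - u)\<bar> \<le> Q"
    unfolding Q_def using fU by (intro member_le_sum) auto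
  define t where "t = 1 + M + Q + \<bar>B\<bar> + norm (That u)"
  have Q0: "Q \<ge> 0" unfolding Q_def by (intro sum_nonneg) auto
  have t0: "t > 0" "t > M" "t > Q" unfolding t_def using M0 Q0 norm_ge_zero[of "That u"] abs_ge_zero[of B] by linarith+
  obtain R where R: "R \<subseteq> X" "card R = k" "finite R"
    using obtain_subset_with_card_n[of k X] kn cX by metis
  define p where "p = (\<lambda>j::nat. (t + real j) *\<^sub>R v0)"
  define P where "P = p ` {1..k}"
  have v00: "v0 \<noteq> 0" using nv by auto
  have np: "\<And>j. norm (p j) = t + real j" unfolding p_def using nv t0 by simp
  have injp: "inj_on p {1..k}"
  proof
    fix i j assume "p i = p j"
    then have "norm (p i) = norm (p j)" by simp
    then show "i = j" using np by simp
  qed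
  have cP: "card P = k" unfolding P_def using card_image[OF injp] by simp
  have fP: "finite P" unfolding P_def by simp
  have PX: "P \<inter> X = {}"
  proof (rule ccontr)
    assume "P \<inter> X \<noteq> {}"
    then obtain j where "p j \<in> X" unfolding P_def by auto
    then have "norm (p j) \<le> M" using Mx by blast
    then show False using np[of j] t0 by simp
  qed
  define Z where "Z = (X - R) \<union> P"
  have fZ: "finite Z" unfolding Z_def using fX fP by simp
  have cXR: "card (X - R) = card U - k" using R fX cX card_Diff_subset by metis
  have disj: "(X - R) \<inter> P = {}" using PX by blast
  have cZ: "card Z = card U" unfolding Z_def
    using card_Un_disjoint[OF _ fP disj] fX cXR cP kn by simp
  have ZX: "Z \<inter> X = X - R" unfolding Z_def using PX by blast
  have ZQ: "Z \<in> Qset k X" unfolding Qset_def using fZ cZ ZX cXR cX by simp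
  obtain T where T: "is_ot_map U Z T" using ot_exists[OF fU fZ] cZ by metis
  have bij: "bij_betw T U Z" using T unfolding is_ot_map_def by blast
  have ntu: "norm (T u) \<ge> t"
  proof (cases "T u \<in> P")
    case True
    then obtain j where "T u = p j" unfolding P_def by auto
    then show ?thesis using np[of j] by simp
  next
    case False
    have TuZ: "T u \<in> Z" using bij uU bij_betwE by blast
    then have "T u \<in> X" using False unfolding Z_def by blast
    then have nTu: "norm (T u) \<le> M" using Mx by blast
    define W where "W = {w\<in>U. T w \<in> P}"
    have "T ` W = P"
    proof
      show "T ` W \<subseteq> P" unfolding W_def by auto
      show "P \<subseteq> T ` W"
      proof
        fix y assume "y \<in> P"
        then have "y \<in> Z" unfolding Z_def by simp
        then obtain w where "w \<in> U" "T w = y" using bij unfolding bij_betw_def by auto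
        then show "y \<in> T ` W" unfolding W_def using \<open>y \<in> P\<close> by auto
      qed
    qed
    moreover have "inj_on T W" using bij unfolding bij_betw_def W_def
      by (auto intro: inj_on_subset)
    ultimately have cW: "card W = k" using cP card_image by metis
    have uW: "u \<notin> W" unfolding W_def using False by simp
    have "\<not> W \<subseteq> S"
    proof
      assume "W \<subseteq> S"
      then have "W \<subseteq> S - {u}" using uW by blast
      then have "card W \<le> card (S - {u})" using fS by (intro card_mono) auto
      also have "\<dots> = k - 1" unfolding k_def using uS fS by simp
      finally have "card W \<le> k - 1" .
      moreover have "k > 0" unfolding k_def using uS fS card_gt_0_iff by blast
      ultimately show False using cW by linarith
    qed
    then obtain w where w: "w \<in> W" "w \<notin> S" by blast
    have wU: "w \<in> U" and TwP: "T w \<in> P" using w unfolding W_def by auto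
    have neg: "inner v0 (w - u) < 0" using w wU unfolding S_def by auto
    have wu: "w \<noteq> u" using neg by auto
    obtain j where j: "T w = p j" using TwP unfolding P_def by auto
    have mono: "inner (T w - T u) (w - u) \<ge> 0" using ot_mono[OF T fU wU uU wu] .
    have "inner (T w) (w - u) \<ge> inner (T u) (w - u)" using mono by (simp add: inner_diff_left)
    moreover have "inner (T u) (w - u) \<ge> - (M * norm (w - u))"
    proof -
      have "\<bar>inner (T u) (w - u)\<bar> \<le> norm (T u) * norm (w - u)" by (rule Cauchy_Schwarz_ineq2)
      also have "\<dots> \<le> M * norm (w - u)" using nTu by (intro mult_right_mono) auto
      finally show ?thesis by linarith
    qed
    moreover have "inner (T w) (w - u) = (t + real j) * inner v0 (w - u)"
      using j unfolding p_def by simp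
    ultimately have ineq: "(t + real j) * (- inner v0 (w - u)) \<le> M * norm (w - u)" by simp
    have "t * (- inner v0 (w - u)) \<le> (t + real j) * (- inner v0 (w - u))"
      using neg by (intro mult_right_mono) auto
    with ineq have "t * (- inner v0 (w - u)) \<le> M * norm (w - u)" by linarith
    then have "t \<le> M * norm (w - u) / (- inner v0 (w - u))" using neg by (simp add: field_simps)
    also have "\<dots> = - (M * norm (w - u) / inner v0 (w - u))" by (simp add: divide_simps)
    also have "\<dots> \<le> \<bar>M * norm (w - u) / inner v0 (w - u)\<bar>" by (rule abs_ge_minus_self)
    also have "\<dots> \<le> Q" using Qw wU by blast
    finally show ?thesis using t0 by linarith
  qed
  have "norm (That u - T u) \<ge> norm (T u) - norm (That u)" using norm_triangle_ineq3[of "T u" "That u"]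
    by (simp add: norm_minus_commute)
  then have "norm (That u - T u) > B" using ntu M0 Q0 abs_ge_self[of B] unfolding t_def by linarith
  then show False using B[OF ZQ T] by linarith
qed


lemma bounded_l:
  fixes U X :: "'a::euclidean_space set" and That :: "'a \<Rightarrow> 'a" and u :: 'a
  assumes fU: "finite U" and fX: "finite X" and cX: "card X = card U"
    and uU: "u \<in> U" and l1: "1 \<le> l" and lK: "l + Km \<le> card U"
    and Km: "\<And>v. norm v = 1 \<Longrightarrow> card {w\<in>U. inner v (w - u) \<ge> 0} \<le> Km"
  shows "\<exists>B. \<forall>Z T. Z \<in> Qset l X \<and> is_ot_map U Z T \<longrightarrow> norm (That u - T u) \<le> B"
proof -
  define n where "n = card U"
  define Fam where "Fam = {K. K \<subseteq> U \<and> card K = n - l \<and> u \<notin> K}"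
  have "Fam \<subseteq> Pow U" unfolding Fam_def by auto
  moreover have "finite (Pow U)" using fU by simp
  ultimately have fFam: "finite Fam" by (rule finite_subset)
  obtain b :: 'a where "b \<in> Basis" using nonempty_Basis by blast
  then have nb: "norm b = 1" by simp
  have "card {w\<in>U. inner b (w - u) \<ge> 0} \<ge> 1"
  proof -
    have "u \<in> {w\<in>U. inner b (w - u) \<ge> 0}" using uU by simp
    moreover have "finite {w\<in>U. inner b (w - u) \<ge> 0}" using fU by simp
    ultimately have "card {w\<in>U. inner b (w - u) \<ge> 0} > 0" using card_gt_0_iff by blast
    then show ?thesis by simp
  qed
  then have Km1: "Km \<ge> 1" using Km[OF nb] by linarith
  have eps: "\<forall>K\<in>Fam. \<exists>e. e > 0 \<and> (\<forall>v. norm v = 1 \<longrightarrow> (\<exists>w\<in>K. inner v (w - u) \<ge> e))"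
  proof
    fix K assume K: "K \<in> Fam"
    have fK: "finite K" using K fU unfolding Fam_def using finite_subset by blast
    have cK: "card K = n - l" and KU: "K \<subseteq> U" and uK: "u \<notin> K" using K unfolding Fam_def by auto
    have "K \<noteq> {}" using cK lK Km1 unfolding n_def by auto
    moreover have "\<exists>w\<in>K. inner v (w - u) > 0" if nv: "norm v = 1" for v
    proof (rule ccontr)
      assume "\<not> (\<exists>w\<in>K. inner v (w - u) > 0)"
      then have "insert u K \<subseteq> {w\<in>U. inner (-v) (w - u) \<ge> 0}" using KU uU by auto
      then have "card (insert u K) \<le> card {w\<in>U. inner (-v) (w - u) \<ge> 0}"
        using fU by (intro card_mono) auto
      also have "\<dots> \<le> Km" using Km[of "-v"] nv by simp
      finally have "n - l + 1 \<le> Km" using fK uK cK by simp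
      then show False using lK unfolding n_def by linarith
    qed
    ultimately show "\<exists>e. e > 0 \<and> (\<forall>v. norm v = 1 \<longrightarrow> (\<exists>w\<in>K. inner v (w - u) \<ge> e))"
      using unif_eps[OF fK] by blast
  qed
  obtain f where f0: "\<forall>K\<in>Fam. f K > 0 \<and> (\<forall>v. norm v = 1 \<longrightarrow> (\<exists>w\<in>K. inner v (w - u) \<ge> f K))"
    using finite_set_choice[OF fFam eps] by blast
  have f: "\<And>K. K \<in> Fam \<Longrightarrow> f K > 0"
    "\<And>K v. K \<in> Fam \<Longrightarrow> norm v = 1 \<Longrightarrow> \<exists>w\<in>K. inner v (w - u) \<ge> f K"
    using f0 by blast+
  define M where "M = (\<Sum>x\<in>X. norm x)"
  have Mx: "\<And>x. x \<in> X \<Longrightarrow> norm x \<le> M" unfolding M_def using fX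
    by (intro member_le_sum) auto
  have M0: "M \<ge> 0" unfolding M_def by (intro sum_nonneg) auto
  define D where "D = (\<Sum>w\<in>U. norm (w - u))"
  have Dw: "\<And>w. w \<in> U \<Longrightarrow> norm (w - u) \<le> D" unfolding D_def using fU
    by (intro member_le_sum) auto
  define C where "C = (\<Sum>K\<in>Fam. M * D / f K)"
  have D0: "D \<ge> 0" unfolding D_def by (intro sum_nonneg) auto
  have nn: "\<And>K. K \<in> Fam \<Longrightarrow> 0 \<le> M * D / f K"
  proof -
    fix K assume "K \<in> Fam"
    then have "f K > 0" using f(1) by blast
    then show "0 \<le> M * D / f K" using M0 D0 by (intro divide_nonneg_pos mult_nonneg_nonneg) auto
  qed
  have CK: "\<And>K. K \<in> Fam \<Longrightarrow> M * D / f K \<le> C" unfolding C_def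
    by (rule member_le_sum) (use nn fFam in auto)
  have C0: "C \<ge> 0" unfolding C_def using nn by (intro sum_nonneg) auto
  show ?thesis
  proof (intro exI[of _ "norm (That u) + M + C"] allI impI)
    fix Z T assume ZT: "Z \<in> Qset l X \<and> is_ot_map U Z T"
    then have T: "is_ot_map U Z T" and fZ: "finite Z" and cZ: "card Z = card X"
      and cZX: "card (Z \<inter> X) = card X - l" unfolding Qset_def by auto
    have bij: "bij_betw T U Z" using T unfolding is_ot_map_def by blast
    have "norm (T u) \<le> M + C"
    proof (cases "T u \<in> X")
      case True then show ?thesis using Mx C0 by fastforce
    next
      case False
      define K where "K = {w\<in>U. T w \<in> X}"
      have "T ` K = Z \<inter> X"
      proof
        show "T ` K \<subseteq> Z \<inter> X" unfolding K_def using bij bij_betwE by blast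
        show "Z \<inter> X \<subseteq> T ` K"
        proof
          fix y assume y: "y \<in> Z \<inter> X"
          then obtain w where "w \<in> U" "T w = y" using bij unfolding bij_betw_def by auto
          then show "y \<in> T ` K" unfolding K_def using y by auto
        qed
      qed
      moreover have "inj_on T K" using bij unfolding bij_betw_def K_def
        by (auto intro: inj_on_subset)
      ultimately have "card K = card (Z \<inter> X)" using card_image by fastforce
      then have cK: "card K = n - l" using cZX cX unfolding n_def by simp
      have KF: "K \<in> Fam" unfolding Fam_def using cK False unfolding K_def by blast
      show ?thesis
      proof (cases "T u = 0")
        case True then show ?thesis using M0 C0 by simp
      next
        case z0: False
        define v where "v = (1 / norm (T u)) *\<^sub>R T u"
        have nv: "norm v = 1" unfolding v_def using z0 by simp
        obtain w where w: "w \<in> K" "inner v (w - u) \<ge> f K" using f(2)[OF KF nv] by blast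
        have wU: "w \<in> U" and TwX: "T w \<in> X" using w unfolding K_def by auto
        have wu: "u \<noteq> w" using w False unfolding K_def by auto
        have mono: "inner (T u - T w) (u - w) \<ge> 0" using ot_mono[OF T fU uU wU wu] .
        have "inner (T u) (w - u) \<le> inner (T w) (w - u)"
        proof -
          have "inner (T u - T w) (u - w) = inner (T w) (w - u) - inner (T u) (w - u)"
            by (simp add: inner_diff_left inner_diff_right algebra_simps)
          then show ?thesis using mono by linarith
        qed
        also have "\<dots> \<le> norm (T w) * norm (w - u)" by (rule real_inner_class.Cauchy_Schwarz_ineq2[THEN abs_le_D1])
        also have "\<dots> \<le> M * D" using Mx[OF TwX] Dw[OF wU] M0 by (intro mult_mono) auto
        finally have a: "inner (T u) (w - u) \<le> M * D" .
        have "inner (T u) (w - u) = norm (T u) * inner v (w - u)" unfolding v_def using z0 by simp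
        also have "\<dots> \<ge> norm (T u) * f K" using w(2) by (intro mult_left_mono) auto
        finally have "norm (T u) * f K \<le> M * D" using a by linarith
        then have "norm (T u) \<le> M * D / f K" using f(1)[OF KF] by (simp add: field_simps)
        then show ?thesis using CK[OF KF] M0 by linarith
      qed
    qed
    then show "norm (That u - T u) \<le> norm (That u) + M + C"
      using norm_triangle_ineq4[of "That u" "T u"] by linarith
  qed
qed


theorem mainTheorem3:
  fixes U X :: "'a::euclidean_space set" and That :: "'a \<Rightarrow> 'a" and u :: 'a
  assumes "finite U" and "finite X" and "card X = card U"
    and "is_ot_map U X That"
    and "u \<in> U"
  shows "lower_tukey_depth u U \<le> BP U X That u \<and> BP U X That u \<le> tukey_depth u U"
proof -
  note fU = assms(1) and fX = assms(2) and cX = assms(3) and uU = assms(5)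
  define n where "n = card U"
  have n0: "n > 0" unfolding n_def using fU uU card_gt_0_iff by blast
  define c where "c = (\<lambda>v. card {w\<in>U. inner v (w - u) \<ge> (0::real)})"
  define h where "h = (\<lambda>v. (1 / real (card U)) * real (card {w\<in>U. inner v (w - u) \<ge> 0}))"
  have cn: "\<And>v. c v \<le> n" unfolding c_def n_def using fU by (intro card_mono) auto
  have c1: "\<And>v. c v \<ge> 1"
  proof -
    fix v
    have "u \<in> {w\<in>U. inner v (w - u) \<ge> (0::real)}" using uU by simp
    moreover have "finite {w\<in>U. inner v (w - u) \<ge> (0::real)}" using fU by simp
    ultimately have "card {w\<in>U. inner v (w - u) \<ge> (0::real)} > 0" using card_gt_0_iff by blast
    then show "c v \<ge> 1" unfolding c_def by simp
  qed
  have hc: "\<And>v. h v = real (c v) / real n" unfolding h_def c_def n_def by simp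
  have fin: "finite (h ` {v. norm v = 1})"
  proof (rule finite_subset)
    show "h ` {v. norm v = 1} \<subseteq> (\<lambda>m. real m / real n) ` {..n}" using hc cn by auto
  qed simp
  obtain b :: 'a where "b \<in> Basis" using nonempty_Basis by blast
  then have nb: "norm b = 1" by simp
  then have ne: "h ` {v. norm v = 1} \<noteq> {}" by auto
  have "Min (h ` {v. norm v = 1}) \<in> h ` {v. norm v = 1}" using fin ne by (rule Min_in)
  then obtain v0 where v0: "norm v0 = 1" "tukey_depth u U = h v0"
    unfolding tukey_depth_def h_def by auto
  have "Max (h ` {v. norm v = 1}) \<in> h ` {v. norm v = 1}" using fin ne by (rule Max_in)
  then obtain v1 where v1: "norm v1 = 1" "Max (h ` {v. norm v = 1}) = h v1" by auto
  have lt: "lower_tukey_depth u U = (real n + 1) / real n - h v1"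
    unfolding lower_tukey_depth_def using v1 unfolding h_def n_def by simp
  have Km: "\<And>v. norm v = 1 \<Longrightarrow> c v \<le> c v1"
  proof -
    fix v :: 'a assume "norm v = 1"
    then have "h v \<le> Max (h ` {v. norm v = 1})" using fin by (intro Max_ge) auto
    then have "real (c v) / real n \<le> real (c v1) / real n" using v1 hc by simp
    then show "c v \<le> c v1" using n0 by (simp add: divide_right_mono_neg field_simps)
  qed
  define P where "P = (\<lambda>l. 1 \<le> l \<and> l \<le> card U \<and>
        \<not> (\<exists>B. \<forall>Z T. Z \<in> Qset l X \<and> is_ot_map U Z T \<longrightarrow> norm (That u - T u) \<le> B))"
  have Pk: "P (c v0)" unfolding P_def using c1 cn unbounded_k[OF fU fX cX uU v0(1), of That]
    unfolding c_def n_def by blast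
  define L where "L = (LEAST l. P l)"
  have PL: "P L" unfolding L_def using Pk by (rule LeastI)
  have Lk: "L \<le> c v0" unfolding L_def using Pk by (rule Least_le)
  have BPL: "BP U X That u = real L / real n" unfolding BP_def L_def P_def n_def by simp
  have up: "BP U X That u \<le> tukey_depth u U"
    unfolding BPL v0(2) hc using Lk n0 by (simp add: divide_right_mono)
  have "\<not> (L + c v1 \<le> n)"
  proof
    assume a: "L + c v1 \<le> n"
    have "\<exists>B. \<forall>Z T. Z \<in> Qset L X \<and> is_ot_map U Z T \<longrightarrow> norm (That u - T u) \<le> B"
      using bounded_l[OF fU fX cX uU _ _ , of L "c v1" That] PL a Km unfolding P_def n_def c_def
      by blast
    then show False using PL unfolding P_def by blast
  qed
  then have "real L + real (c v1) \<ge> real n + 1" by linarith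
  then have "(real n + 1) / real n - real (c v1) / real n \<le> real L / real n"
  proof -
    have "(real n + 1) / real n - real (c v1) / real n = (real n + 1 - real (c v1)) / real n"
      by (simp add: diff_divide_distrib)
    also have "\<dots> \<le> real L / real n" using \<open>real L + real (c v1) \<ge> real n + 1\<close> n0
      by (intro divide_right_mono) auto
    finally show ?thesis .
  qed
  then have low: "lower_tukey_depth u U \<le> BP U X That u" unfolding lt BPL hc .
  show ?thesis using low up by blast
qed

end
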